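(* Let $H$ be a complex Hilbert space and $\{\mathcal{U}(t)\}_{t\in\mathbb{R}}$ a strongly continuous group on $H$ with generator $\mathcal{L}$. Let $z\in D(\mathcal{L}^\dagger)$ with $z\neq0$, $\mathcal{P}:=(\cdot,z)(z,z)^{-1}z$, $\mathcal{Q}:=1-\mathcal{P}$. Then $\overline{\mathcal{QL}}\mathcal{Q}$ generates a strongly continuous group.
   Context: The scalar product $(\cdot,\cdot)$ on $H$ is conjugate-linear in its second argument. The generator is $\mathcal{L}x:=\lim_{h\to 0}\frac1h[\mathcal{U}(h)x-x]$ on the set $D(\mathcal{L})$ where the limit exists; $\dagger$ denotes the adjoint, the overbar the closure; $D(\overline{\mathcal{QL}}\mathcal{Q})=\{x:\mathcal{Q}x\in D(\overline{\mathcal{QL}})\}$. *)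

theory Defs
  imports "HOL-Analysis.Analysis"
begin

text \<open>A complex Hilbert space is encoded as a real Banach space (type class banach)
  equipped with a complex structure J (multiplication by the imaginary unit) and a
  complex scalar product ip, linear in its first and conjugate-linear in its second
  argument, inducing the norm.\<close>

definition cscale :: "('a::real_vector \<Rightarrow> 'a) \<Rightarrow> complex \<Rightarrow> 'a \<Rightarrow> 'a" where
  "cscale J c x = Re c *\<^sub>R x + Im c *\<^sub>R J x"

definition complex_hilbert :: "('a::banach \<Rightarrow> 'a) \<Rightarrow> ('a \<Rightarrow> 'a \<Rightarrow> complex) \<Rightarrow> bool" where
  "complex_hilbert J ip \<longleftrightarrow>
     bounded_linear J \<and> (\<forall>x. J (J x) = - x) \<and>
     (\<forall>x y w. ip (x + y) w = ip x w + ip y w) \<and>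
     (\<forall>c x y. ip (cscale J c x) y = c * ip x y) \<and>
     (\<forall>x y. ip x y = cnj (ip y x)) \<and>
     (\<forall>x. ip x x = complex_of_real ((norm x)\<^sup>2))"

definition bounded_clinear_op :: "('a::real_normed_vector \<Rightarrow> 'a) \<Rightarrow> ('a \<Rightarrow> 'a) \<Rightarrow> bool" where
  "bounded_clinear_op J T \<longleftrightarrow> bounded_linear T \<and> (\<forall>x. T (J x) = J (T x))"

definition sc_group :: "('a::real_normed_vector \<Rightarrow> 'a) \<Rightarrow> (real \<Rightarrow> 'a \<Rightarrow> 'a) \<Rightarrow> bool" where
  "sc_group J U \<longleftrightarrow>
     (\<forall>t. bounded_clinear_op J (U t)) \<and>
     U 0 = id \<and> (\<forall>s t. U (s + t) = U s \<circ> U t) \<and>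
     (\<forall>x. continuous_on UNIV (\<lambda>t. U t x))"

definition gen_dom :: "(real \<Rightarrow> 'a::real_normed_vector \<Rightarrow> 'a) \<Rightarrow> 'a set" where
  "gen_dom U = {x. \<exists>y. ((\<lambda>h. (1 / h) *\<^sub>R (U h x - x)) \<longlongrightarrow> y) (at 0)}"

definition gen :: "(real \<Rightarrow> 'a::real_normed_vector \<Rightarrow> 'a) \<Rightarrow> 'a \<Rightarrow> 'a" where
  "gen U x = Lim (at 0) (\<lambda>h. (1 / h) *\<^sub>R (U h x - x))"

definition adj_dom :: "('a \<Rightarrow> 'a \<Rightarrow> complex) \<Rightarrow> 'a set \<Rightarrow> ('a \<Rightarrow> 'a) \<Rightarrow> 'a set" where
  "adj_dom ip D L = {z. \<exists>w. \<forall>x\<in>D. ip (L x) z = ip x w}"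

definition projP :: "('a::real_vector \<Rightarrow> 'a) \<Rightarrow> ('a \<Rightarrow> 'a \<Rightarrow> complex) \<Rightarrow> 'a \<Rightarrow> 'a \<Rightarrow> 'a" where
  "projP J ip z x = cscale J (ip x z / ip z z) z"

definition projQ :: "('a::real_vector \<Rightarrow> 'a) \<Rightarrow> ('a \<Rightarrow> 'a \<Rightarrow> complex) \<Rightarrow> 'a \<Rightarrow> 'a \<Rightarrow> 'a" where
  "projQ J ip z x = x - projP J ip z x"

definition op_graph :: "'a set \<Rightarrow> ('a \<Rightarrow> 'a) \<Rightarrow> ('a \<times> 'a) set" where
  "op_graph D A = {(x, A x) | x. x \<in> D}"

definition is_graph :: "('a \<times> 'a) set \<Rightarrow> bool" where
  "is_graph G \<longleftrightarrow> (\<forall>x y y'. (x, y) \<in> G \<longrightarrow> (x, y') \<in> G \<longrightarrow> y = y')"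

definition cl_dom :: "'a::topological_space set \<Rightarrow> ('a \<Rightarrow> 'a) \<Rightarrow> 'a set" where
  "cl_dom D A = {x. \<exists>y. (x, y) \<in> closure (op_graph D A)}"

definition cl_op :: "'a::topological_space set \<Rightarrow> ('a \<Rightarrow> 'a) \<Rightarrow> 'a \<Rightarrow> 'a" where
  "cl_op D A x = (THE y. (x, y) \<in> closure (op_graph D A))"

end

theory Submission
  imports Defs
begin

definition oint :: "real \<Rightarrow> (real \<Rightarrow> 'b::banach) \<Rightarrow> 'b" where
  "oint t F = (if 0 \<le> t then integral {0..t} F else - integral {t..0} F)"

lemma oint_scaled_pos:
  fixes F :: "real \<Rightarrow> 'b::banach"
  assumes F: "continuous_on UNIV F" and t: "0 < t"
  shows "integral {0..t} F = t *\<^sub>R integral {0..1} (\<lambda>u. F (t * u))"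
proof -
  have "(F has_integral integral {0..t} F) {0..t}"
    using F by (intro integrable_integral integrable_continuous_interval continuous_on_subset[OF F]) auto
  then have "((\<lambda>x. F (t *\<^sub>R x + 0)) has_integral (integral {0..t} F) /\<^sub>R t ^ DIM(real))
     (cbox ((0 - 0) /\<^sub>R t) ((t - 0) /\<^sub>R t))"
    by (intro has_integral_affinity_iff[OF t, THEN iffD2]) (simp add: cbox_interval)
  then have "((\<lambda>x. F (t * x)) has_integral (integral {0..t} F) /\<^sub>R t) {0..1}"
    using t by (simp add: cbox_interval)
  then have "integral {0..1} (\<lambda>x. F (t * x)) = (integral {0..t} F) /\<^sub>R t"
    by (rule integral_unique)
  then show ?thesis using t by simp
qed

lemma oint_scaled:
  fixes F :: "real \<Rightarrow> 'b::banach"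
  assumes F: "continuous_on UNIV F"
  shows "oint t F = t *\<^sub>R integral {0..1} (\<lambda>u. F (t * u))"
proof (cases "0 < t")
  case True then show ?thesis using oint_scaled_pos[OF F True] by (simp add: oint_def)
next
  case False
  show ?thesis
  proof (cases "t = 0")
    case True then show ?thesis by (simp add: oint_def)
  next
    case False2: False
    with False have t: "0 < - t" by simp
    have G: "continuous_on UNIV (\<lambda>x. F (- x))"
      by (intro continuous_on_compose2[OF F]) (auto intro: continuous_intros)
    have "(F has_integral integral {t..0} F) {t..0}"
      using F by (intro integrable_integral integrable_continuous_interval continuous_on_subset[OF F]) auto
    then have "((\<lambda>x. F (- x)) has_integral integral {t..0} F) {-0..-t}"
      by (subst has_integral_reflect_real)
    then have "integral {0..-t} (\<lambda>x. F (- x)) = integral {t..0} F"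
      by (simp add: integral_unique)
    also have "integral {0..-t} (\<lambda>x. F (- x)) = (-t) *\<^sub>R integral {0..1} (\<lambda>u. F (- (-t * u)))"
      by (rule oint_scaled_pos[OF G t])
    finally have A: "- (t *\<^sub>R integral {0..1} (\<lambda>u. F (t * u))) = integral {t..0} F" by simp
    show ?thesis using False False2 by (simp add: oint_def) (metis A minus_minus)
  qed
qed

lemma oint_0 [simp]: "oint 0 F = 0"
  by (simp add: oint_def)

lemma oint_as_diff:
  fixes F :: "real \<Rightarrow> 'b::banach"
  assumes F: "continuous_on UNIV F" and s: "-R \<le> s" "-R \<le> 0"
  shows "oint s F = integral {-R..s} F - integral {-R..0} F"
proof (cases "0 \<le> s")
  case True
  have "integral {-R..0} F + integral {0..s} F = integral {-R..s} F"
    using True s by (intro Henstock_Kurzweil_Integration.integral_combine integrable_continuous_interval continuous_on_subset[OF F]) auto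
  then show ?thesis using True by (simp add: oint_def algebra_simps)
next
  case False
  have "integral {-R..s} F + integral {s..0} F = integral {-R..0} F"
    using False s by (intro Henstock_Kurzweil_Integration.integral_combine integrable_continuous_interval continuous_on_subset[OF F]) auto
  then show ?thesis using False by (simp add: oint_def algebra_simps)
qed

lemma oint_deriv:
  fixes F :: "real \<Rightarrow> 'b::banach"
  assumes F: "continuous_on UNIV F"
  shows "((\<lambda>s. oint s F) has_vector_derivative F t) (at t)"
proof -
  define R where "R = \<bar>t\<bar> + 1"
  have "((\<lambda>u. integral {-R..u} F) has_vector_derivative F t) (at t within {-R..R})"
    by (rule integral_has_vector_derivative) (auto simp: R_def intro: continuous_on_subset[OF F])
  then have "((\<lambda>u. integral {-R..u} F) has_vector_derivative F t) (at t within {-R<..<R})"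
    by (rule has_vector_derivative_within_subset) auto
  then have "((\<lambda>u. integral {-R..u} F) has_vector_derivative F t) (at t)"
    by (subst (asm) has_vector_derivative_within_open) (auto simp: R_def)
  then have d: "((\<lambda>u. integral {-R..u} F - integral {-R..0} F) has_vector_derivative F t) (at t)"
    by (rule derivative_eq_intros) auto
  show ?thesis
  proof (rule has_vector_derivative_transform_within_open[OF d, of "{-R<..<R}"])
    fix y assume "y \<in> {-R<..<R}"
    then show "integral {-R..y} F - integral {-R..0} F = oint y F"
      using oint_as_diff[OF F, of R y] by (auto simp: R_def)
  qed (auto simp: R_def)
qed

lemma zero_deriv_const:
  fixes f :: "real \<Rightarrow> 'b::real_normed_vector"
  assumes "\<And>t. (f has_vector_derivative 0) (at t)"
  shows "f t = f s"
proof -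
  obtain c where "\<And>x. x \<in> UNIV \<Longrightarrow> f x = c"
    using has_vector_derivative_zero_constant[of UNIV f] assms by auto
  then show ?thesis by auto
qed

lemma same_deriv_eq:
  fixes f g :: "real \<Rightarrow> 'b::real_normed_vector"
  assumes "\<And>t. (f has_vector_derivative h t) (at t)" "\<And>t. (g has_vector_derivative h t) (at t)"
    and "f 0 = g 0"
  shows "f t = g t"
proof -
  have "\<And>t. ((\<lambda>t. f t - g t) has_vector_derivative 0) (at t)"
    using has_vector_derivative_diff[OF assms(1) assms(2)] by simp
  then have "f t - g t = f 0 - g 0" by (rule zero_deriv_const)
  then show ?thesis using assms(3) by simp
qed

lemma oint_shift:
  fixes F :: "real \<Rightarrow> 'b::banach"
  assumes F: "continuous_on UNIV F"
  shows "oint (s + t) F = oint s F + oint t (\<lambda>r. F (s + r))"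
proof -
  have G: "continuous_on UNIV (\<lambda>r. F (s + r))"
    by (intro continuous_on_compose2[OF F]) (auto intro: continuous_intros)
  have d1: "((\<lambda>t. oint (s + t) F) has_vector_derivative F (s + t)) (at t)" for t
  proof -
    have "((\<lambda>u. oint u F) \<circ> (\<lambda>t. s + t) has_vector_derivative 1 *\<^sub>R F (s + t)) (at t)"
      by (rule vector_diff_chain_at) (auto intro!: derivative_eq_intros oint_deriv[OF F])
    then show ?thesis by (simp add: o_def)
  qed
  have d2: "((\<lambda>t. oint s F + oint t (\<lambda>r. F (s + r))) has_vector_derivative F (s + t)) (at t)" for t
    using oint_deriv[OF G, of t] by (auto intro!: derivative_eq_intros)
  show ?thesis
    by (rule same_deriv_eq[OF d1 d2]) simp
qed

lemma oint_linear:
  fixes F :: "real \<Rightarrow> 'b::banach"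
  assumes F: "continuous_on UNIV F" and h: "bounded_linear h"
  shows "h (oint t F) = oint t (\<lambda>s. h (F s))"
proof -
  have "h (integral {a..b} F) = integral {a..b} (\<lambda>s. h (F s))" for a b
    by (rule integral_linear[OF integrable_continuous_interval[OF continuous_on_subset[OF F]] h, symmetric, unfolded o_def]) auto
  then show ?thesis using linear_simps(4)[OF h] by (simp add: oint_def)
qed

lemma oint_add:
  fixes F G :: "real \<Rightarrow> 'b::banach"
  assumes F: "continuous_on UNIV F" and G: "continuous_on UNIV G"
  shows "oint t (\<lambda>s. F s + G s) = oint t F + oint t G"
proof -
  have "integral {a..b} (\<lambda>s. F s + G s) = integral {a..b} F + integral {a..b} G" for a b
    by (intro integral_add integrable_continuous_interval continuous_on_subset[OF F] continuous_on_subset[OF G]) auto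
  then show ?thesis by (simp add: oint_def)
qed

lemma oint_diff:
  fixes F G :: "real \<Rightarrow> 'b::banach"
  assumes F: "continuous_on UNIV F" and G: "continuous_on UNIV G"
  shows "oint t (\<lambda>s. F s - G s) = oint t F - oint t G"
proof -
  have "integral {a..b} (\<lambda>s. F s - G s) = integral {a..b} F - integral {a..b} G" for a b
    by (intro integral_diff integrable_continuous_interval continuous_on_subset[OF F] continuous_on_subset[OF G]) auto
  then show ?thesis by (simp add: oint_def)
qed

lemma oint_cong:
  assumes "\<And>s. F s = G s" shows "oint t F = oint t G"
  using assms by (metis ext)

lemma oint_bound:
  fixes F :: "real \<Rightarrow> 'b::banach"
  assumes F: "continuous_on UNIV F" and B: "\<And>u. u \<in> {0..1} \<Longrightarrow> norm (F (t * u)) \<le> B"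
  shows "norm (oint t F) \<le> \<bar>t\<bar> * B"
proof -
  have c: "continuous_on {0..1} (\<lambda>u. F (t * u))"
    by (intro continuous_on_compose2[OF F]) (auto intro: continuous_intros)
  have "norm (integral {0..1} (\<lambda>u. F (t * u))) \<le> integral {0..1::real} (\<lambda>u. B)"
  proof (rule Henstock_Kurzweil_Integration.integral_norm_bound_integral)
    show "(\<lambda>u. F (t * u)) integrable_on {0..1}" using c by (rule integrable_continuous_interval)
    show "(\<lambda>u. B) integrable_on {0..1::real}" by (intro integrable_continuous_interval continuous_intros)
    fix u :: real assume "u \<in> {0..1}"
    then show "norm (F (t * u)) \<le> B" by (rule B)
  qed
  then show ?thesis by (simp add: oint_scaled[OF F] mult_left_mono)
qed

lemma oint_bound':
  fixes F :: "real \<Rightarrow> 'b::banach"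
  assumes F: "continuous_on UNIV F" and B: "\<And>s. \<bar>s\<bar> \<le> \<bar>t\<bar> \<Longrightarrow> norm (F s) \<le> B"
  shows "norm (oint t F) \<le> \<bar>t\<bar> * B"
proof (rule oint_bound[OF F])
  fix u :: real assume "u \<in> {0..1}"
  then have "\<bar>t * u\<bar> \<le> \<bar>t\<bar>" by (auto simp: abs_mult mult_left_le)
  then show "norm (F (t * u)) \<le> B" by (rule B)
qed

lemma oint_limit:
  fixes F :: "real \<Rightarrow> real \<Rightarrow> 'b::banach"
  assumes F: "continuous_on UNIV (\<lambda>p. F (fst p) (snd p))"
  shows "((\<lambda>h. (1 / h) *\<^sub>R oint h (F h)) \<longlongrightarrow> F 0 0) (at 0)"
proof -
  have Fh: "continuous_on UNIV (F h)" for h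
  proof -
    have "continuous_on UNIV (\<lambda>s. (\<lambda>p. F (fst p) (snd p)) (h, s))"
      by (rule continuous_on_compose2[OF F]) (auto intro: continuous_intros)
    then show ?thesis by simp
  qed
  have "continuous_on (UNIV \<times> cbox 0 1) (\<lambda>p. (\<lambda>q. F (fst q) (snd q)) (fst p, fst p * snd p))"
    by (rule continuous_on_compose2[OF F]) (auto intro!: continuous_intros)
  then have "continuous_on (UNIV \<times> cbox 0 1) (\<lambda>(h, u). F h (h * u))"
    by (simp add: case_prod_unfold)
  then have "continuous_on UNIV (\<lambda>h. integral (cbox 0 1) (\<lambda>u. F h (h * u)))"
    by (rule integral_continuous_on_param)
  then have "isCont (\<lambda>h. integral (cbox 0 1) (\<lambda>u. F h (h * u))) 0"
    by (simp add: continuous_on_eq_continuous_at)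
  then have "((\<lambda>h. integral (cbox 0 1) (\<lambda>u. F h (h * u))) \<longlongrightarrow> integral (cbox 0 1) (\<lambda>u. F 0 (0 * u))) (at 0)"
    unfolding isCont_def .
  moreover have "integral (cbox 0 1) (\<lambda>u. F 0 (0 * u)) = F 0 0" by simp
  ultimately have l: "((\<lambda>h. integral {0..1} (\<lambda>u. F h (h * u))) \<longlongrightarrow> F 0 0) (at 0)"
    by (simp add: cbox_interval)
  show ?thesis
  proof (rule Lim_transform_within[OF l zero_less_one])
    fix h :: real assume "0 < dist h 0" "dist h 0 < 1"
    then have "h \<noteq> 0" by simp
    then show "integral {0..1} (\<lambda>u. F h (h * u)) = (1 / h) *\<^sub>R oint h (F h)"
      by (simp add: oint_scaled[OF Fh])
  qed
qed

lemma oint_cont_param: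
  fixes F :: "real \<Rightarrow> real \<Rightarrow> 'b::banach"
  assumes F: "continuous_on UNIV (\<lambda>p. F (fst p) (snd p))"
  shows "continuous_on UNIV (\<lambda>t. oint t (F t))"
proof -
  have Fh: "continuous_on UNIV (F h)" for h
  proof -
    have "continuous_on UNIV (\<lambda>s. (\<lambda>p. F (fst p) (snd p)) (h, s))"
      by (rule continuous_on_compose2[OF F]) (auto intro: continuous_intros)
    then show ?thesis by simp
  qed
  have "continuous_on (UNIV \<times> cbox 0 1) (\<lambda>p. (\<lambda>q. F (fst q) (snd q)) (fst p, fst p * snd p))"
    by (rule continuous_on_compose2[OF F]) (auto intro!: continuous_intros)
  then have "continuous_on (UNIV \<times> cbox 0 1) (\<lambda>(h, u). F h (h * u))"
    by (simp add: case_prod_unfold)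
  then have "continuous_on UNIV (\<lambda>h. integral (cbox 0 1) (\<lambda>u. F h (h * u)))"
    by (rule integral_continuous_on_param)
  then have "continuous_on UNIV (\<lambda>h. h *\<^sub>R integral {0..1} (\<lambda>u. F h (h * u)))"
    by (auto simp: cbox_interval intro!: continuous_intros)
  then show ?thesis by (simp add: oint_scaled[OF Fh])
qed

lemma cscale_real [simp]: "cscale J (complex_of_real r) x = r *\<^sub>R x"
  by (simp add: cscale_def)

lemma cscale_1 [simp]: "cscale J 1 x = x"
  by (simp add: cscale_def)

lemma cscale_0 [simp]: "cscale J 0 x = 0"
  by (simp add: cscale_def)

lemma cscale_add_left: "cscale J (c + d) x = cscale J c x + cscale J d x"
  by (simp add: cscale_def scaleR_add_left)

lemma cscale_diff_left: "cscale J (c - d) x = cscale J c x - cscale J d x"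
  by (simp add: cscale_def scaleR_diff_left)

locale chs =
  fixes J :: "'a::banach \<Rightarrow> 'a" and ip :: "'a \<Rightarrow> 'a \<Rightarrow> complex"
  assumes ch: "complex_hilbert J ip"
begin

lemma J_bl: "bounded_linear J" using ch unfolding complex_hilbert_def by blast
lemma JJ [simp]: "J (J x) = - x" using ch unfolding complex_hilbert_def by blast
lemma ip_add: "ip (x + y) w = ip x w + ip y w" using ch unfolding complex_hilbert_def by blast
lemma ip_cscale: "ip (cscale J c x) y = c * ip x y" using ch unfolding complex_hilbert_def by blast
lemma ip_cnj: "ip x y = cnj (ip y x)" using ch unfolding complex_hilbert_def by blast
lemma ip_self: "ip x x = complex_of_real ((norm x)\<^sup>2)" using ch unfolding complex_hilbert_def by blast

lemma J_add: "J (x + y) = J x + J y" using J_bl by (simp add: linear_simps)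
lemma J_scaleR: "J (r *\<^sub>R x) = r *\<^sub>R J x" using J_bl by (simp add: linear_simps)
lemma J_minus: "J (- x) = - J x" using J_bl by (simp add: linear_simps)
lemma J_diff: "J (x - y) = J x - J y" using J_bl by (simp add: linear_simps)

lemma ip_scaleR: "ip (r *\<^sub>R x) y = r * ip x y"
  using ip_cscale[of "complex_of_real r" x y] by simp

lemma ip_zero [simp]: "ip 0 y = 0"
  using ip_scaleR[of 0 y y] by simp

lemma ip_minus: "ip (- x) y = - ip x y"
  using ip_scaleR[of "-1" x y] by simp

lemma ip_diff: "ip (x - y) w = ip x w - ip y w"
  using ip_add[of x "- y" w] ip_minus[of y w] by simp

lemma ip_J: "ip (J x) y = \<i> * ip x y"
  using ip_cscale[of \<i> x y] by (simp add: cscale_def)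

lemma ip_add2: "ip x (y + w) = ip x y + ip x w"
  by (metis ip_cnj ip_add complex_cnj_add)

lemma ip_zero2 [simp]: "ip y 0 = 0"
  by (metis ip_cnj ip_zero complex_cnj_zero)

lemma norm_add_sq: "(norm (x + y))\<^sup>2 = (norm x)\<^sup>2 + (norm y)\<^sup>2 + 2 * Re (ip x y)"
proof -
  have e: "ip (x + y) (x + y) = ip x x + ip y y + (ip x y + cnj (ip x y))"
    by (simp add: ip_add ip_add2 ip_cnj[of y x])
  have "(norm (x + y))\<^sup>2 = Re (ip (x + y) (x + y))" by (simp add: ip_self)
  also have "\<dots> = Re (ip x x) + Re (ip y y) + 2 * Re (ip x y)" using e by simp
  also have "Re (ip x x) = (norm x)\<^sup>2" by (simp add: ip_self)
  also have "Re (ip y y) = (norm y)\<^sup>2" by (simp add: ip_self)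
  finally show ?thesis .
qed

lemma Re_ip_le: "Re (ip x y) \<le> norm x * norm y"
proof -
  have "(norm (x + y))\<^sup>2 \<le> (norm x + norm y)\<^sup>2"
    by (simp add: norm_triangle_ineq power_mono)
  then show ?thesis using norm_add_sq[of x y] by (simp add: power2_sum)
qed

lemma abs_Re_ip: "\<bar>Re (ip x y)\<bar> \<le> norm x * norm y"
  using Re_ip_le[of x y] Re_ip_le[of "- x" y] by (simp add: ip_minus)

lemma norm_J [simp]: "norm (J x) = norm x"
proof -
  have "ip (J x) (J x) = \<i> * ip x (J x)" by (rule ip_J)
  also have "ip x (J x) = cnj (ip (J x) x)" by (rule ip_cnj)
  also have "ip (J x) x = \<i> * ip x x" by (rule ip_J)
  finally have "ip (J x) (J x) = ip x x" by (simp add: ip_self)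
  then have "(norm (J x))\<^sup>2 = (norm x)\<^sup>2" by (metis ip_self Re_complex_of_real)
  then show ?thesis by (simp add: power2_eq_iff_nonneg)
qed

lemma Im_ip: "Im (ip x y) = - Re (ip (J x) y)"
  by (simp add: ip_J)

lemma ip_bound: "cmod (ip x y) \<le> 2 * norm x * norm y"
proof -
  have "cmod (ip x y) \<le> \<bar>Re (ip x y)\<bar> + \<bar>Im (ip x y)\<bar>" by (rule cmod_le)
  also have "\<bar>Im (ip x y)\<bar> \<le> norm x * norm y"
    using abs_Re_ip[of "J x" y] by (simp add: Im_ip)
  finally show ?thesis using abs_Re_ip[of x y] by simp
qed

lemma ip_bl: "bounded_linear (\<lambda>x. ip x y)"
proof (rule bounded_linear_intro[of _ "2 * norm y"])
  show "ip (x + x') y = ip x y + ip x' y" for x x' by (rule ip_add)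
  show "ip (r *\<^sub>R x) y = r *\<^sub>R ip x y" for r x by (simp add: ip_scaleR scaleR_conv_of_real)
  show "norm (ip x y) \<le> norm x * (2 * norm y)" for x using ip_bound[of x y] by (simp add: algebra_simps)
qed

lemma cscale_bl: "bounded_linear (cscale J c)"
  unfolding cscale_def[abs_def]
  by (intro bounded_linear_add bounded_linear_scaleR_right bounded_linear_compose[OF bounded_linear_scaleR_right J_bl] bounded_linear_ident)

lemma cscale_add: "cscale J c (x + y) = cscale J c x + cscale J c y"
  using cscale_bl by (simp add: linear_simps)

lemma cscale_diff: "cscale J c (x - y) = cscale J c x - cscale J c y"
  using cscale_bl by (simp add: linear_simps)

lemma cscale_minus: "cscale J c (- x) = - cscale J c x"
  using cscale_bl by (simp add: linear_simps)

lemma cscale_zero [simp]: "cscale J c 0 = 0"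
  using cscale_bl by (simp add: linear_simps)

lemma cscale_mult: "cscale J c (cscale J d x) = cscale J (c * d) x"
  by (simp add: cscale_def J_add J_scaleR algebra_simps scaleR_add_left scaleR_diff_left)

lemma J_cscale: "J (cscale J c x) = cscale J (\<i> * c) x"
  by (simp add: cscale_def J_add J_scaleR algebra_simps)

lemma cscale_i: "cscale J \<i> x = J x"
  by (simp add: cscale_def)

lemma clinear_cscale:
  assumes "bounded_clinear_op J T"
  shows "T (cscale J c x) = cscale J c (T x)"
  using assms by (simp add: bounded_clinear_op_def cscale_def linear_simps)

lemma tendsto_cscale [tendsto_intros]:
  assumes "(f \<longlongrightarrow> c) F" "(g \<longlongrightarrow> x) F"
  shows "((\<lambda>t. cscale J (f t) (g t)) \<longlongrightarrow> cscale J c x) F"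
  unfolding cscale_def
  by (intro tendsto_intros bounded_linear.tendsto[OF J_bl] assms)

lemma continuous_on_cscale [continuous_intros]:
  assumes "continuous_on S f" "continuous_on S g"
  shows "continuous_on S (\<lambda>t. cscale J (f t) (g t))"
  using assms unfolding continuous_on_def by (auto intro: tendsto_cscale)

lemma continuous_on_ip [continuous_intros]:
  assumes "continuous_on S f"
  shows "continuous_on S (\<lambda>t. ip (f t) y)"
  using bounded_linear.continuous_on[OF ip_bl assms] .

lemma ip_cscale2: "ip x (cscale J c y) = cnj c * ip x y"
  by (metis ip_cnj ip_cscale complex_cnj_mult)

end

definition vol :: "(real \<Rightarrow> complex) \<Rightarrow> (real \<Rightarrow> complex) \<Rightarrow> real \<Rightarrow> complex" where
  "vol k g t = oint t (\<lambda>s. k (t - s) * g s)"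

lemma contU: "continuous_on UNIV f \<Longrightarrow> continuous_on S g \<Longrightarrow> continuous_on S (\<lambda>x. f (g x))"
  by (rule continuous_on_compose2[of UNIV f S g]) auto

lemma cont_vol_integrand:
  fixes k g :: "real \<Rightarrow> complex"
  assumes k: "continuous_on UNIV k" and g: "continuous_on UNIV g"
  shows "continuous_on UNIV (\<lambda>s. k (t - s) * g s)"
proof -
  have "continuous_on UNIV (\<lambda>s. k (t - s))" by (rule contU[OF k]) (simp add: continuous_on_op_minus)
  then show ?thesis using g by (rule continuous_on_mult)
qed

lemma vol_cont:
  assumes k: "continuous_on UNIV k" and g: "continuous_on UNIV g"
  shows "continuous_on UNIV (vol k g)"
proof -
  have "continuous_on UNIV (\<lambda>p. k (fst p - snd p) * g (snd p))"
    by (intro continuous_intros contU[OF k] contU[OF g])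
  then have "continuous_on UNIV (\<lambda>t. oint t (\<lambda>s. k (t - s) * g s))"
    by (rule oint_cont_param[where F="\<lambda>t s. k (t - s) * g s", simplified])
  then show ?thesis by (simp add: vol_def[abs_def])
qed

lemma vol_add:
  assumes k: "continuous_on UNIV k" and g: "continuous_on UNIV g" and h: "continuous_on UNIV h"
  shows "vol k (\<lambda>s. g s + h s) t = vol k g t + vol k h t"
  unfolding vol_def
  by (simp add: distrib_left oint_add[OF cont_vol_integrand[OF k g] cont_vol_integrand[OF k h]])

lemma vol_cmult:
  assumes k: "continuous_on UNIV k" and g: "continuous_on UNIV g"
  shows "vol k (\<lambda>s. c * g s) t = c * vol k g t"
proof -
  have "c * vol k g t = oint t (\<lambda>s. c * (k (t - s) * g s))"
    unfolding vol_def by (rule oint_linear[OF cont_vol_integrand[OF k g] bounded_linear_mult_right])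
  then show ?thesis by (simp add: vol_def algebra_simps)
qed

lemma vol_minus:
  assumes k: "continuous_on UNIV k" and g: "continuous_on UNIV g"
  shows "vol k (\<lambda>s. - g s) t = - vol k g t"
  using vol_cmult[OF k g, of "-1" t] by simp

lemma vol_diff:
  assumes k: "continuous_on UNIV k" and g: "continuous_on UNIV g" and h: "continuous_on UNIV h"
  shows "vol k (\<lambda>s. g s - h s) t = vol k g t - vol k h t"
proof -
  have h': "continuous_on UNIV (\<lambda>s. - h s)" using h by (intro continuous_intros)
  show ?thesis using vol_add[OF k g h', of t] vol_minus[OF k h, of t] by simp
qed

lemma vol_zero: "vol k (\<lambda>s. 0) t = 0"
proof -
  have "oint t (\<lambda>s. 0::complex) = 0" by (simp add: oint_def)
  then show ?thesis by (simp add: vol_def)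
qed

lemma vol_sum:
  assumes k: "continuous_on UNIV k" and d: "\<And>i. continuous_on UNIV (d i)"
  shows "vol k (\<lambda>s. \<Sum>i<(N::nat). d i s) t = (\<Sum>i<N. vol k (d i) t)"
proof (induction N)
  case 0 then show ?case by (simp add: vol_zero)
next
  case (Suc N)
  have "vol k (\<lambda>s. \<Sum>i<Suc N. d i s) t = vol k (\<lambda>s. (\<Sum>i<N. d i s) + d N s) t" by simp
  also have "\<dots> = vol k (\<lambda>s. \<Sum>i<N. d i s) t + vol k (d N) t"
    by (rule vol_add[OF k _ d]) (intro continuous_intros d)
  finally show ?case using Suc by simp
qed

lemma integral_pow01: "((\<lambda>u::real. u ^ n) has_integral 1 / real (Suc n)) {0..1}"
proof -
  have "((\<lambda>u::real. u ^ n) has_integral (1 ^ Suc n / real (Suc n) - 0 ^ Suc n / real (Suc n))) {0..1}"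
  proof (rule fundamental_theorem_of_calculus)
    fix x :: real assume "x \<in> {0..1}"
    have "((\<lambda>u::real. u ^ Suc n / real (Suc n)) has_real_derivative (real (Suc n) * x ^ n / real (Suc n))) (at x within {0..1})"
      by (intro derivative_eq_intros) auto
    then show "((\<lambda>u::real. u ^ Suc n / real (Suc n)) has_vector_derivative x ^ n) (at x within {0..1})"
      by (simp add: has_real_derivative_iff_has_vector_derivative)
  qed simp
  then show ?thesis by simp
qed

lemma cont_bound:
  fixes f :: "real \<Rightarrow> 'b::real_normed_vector"
  assumes "continuous_on UNIV f"
  obtains C where "0 \<le> C" "\<And>s. \<bar>s\<bar> \<le> a \<Longrightarrow> norm (f s) \<le> C"
proof -
  have "compact (f ` {-a..a})"
    by (rule compact_continuous_image[OF continuous_on_subset[OF assms]]) auto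
  then obtain B where "B > 0" "\<And>x. x \<in> f ` {-a..a} \<Longrightarrow> norm x \<le> B"
    using compact_imp_bounded bounded_pos by metis
  then show ?thesis using that[of B] by (auto simp: abs_le_iff)
qed

lemma vol_step:
  assumes k: "continuous_on UNIV k" and d: "continuous_on UNIV d"
    and K: "0 \<le> K" "\<And>s. \<bar>s\<bar> \<le> a \<Longrightarrow> cmod (k s) \<le> K"
    and C: "0 \<le> C" "\<And>s. \<bar>s\<bar> \<le> a \<Longrightarrow> cmod (d s) \<le> C * (K * \<bar>s\<bar>) ^ n / fact n"
    and t: "\<bar>t\<bar> \<le> a"
  shows "cmod (vol k d t) \<le> C * (K * \<bar>t\<bar>) ^ Suc n / fact (Suc n)"
proof -
  have F: "continuous_on UNIV (\<lambda>s. k (t - s) * d s)" by (rule cont_vol_integrand[OF k d])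
  have cF: "continuous_on {0..1} (\<lambda>u. k (t - t * u) * d (t * u))"
    by (intro continuous_intros contU[OF k] contU[OF d])
  define D where "D = K * C * (K * \<bar>t\<bar>) ^ n / fact n"
  have D: "0 \<le> D" using K C by (simp add: D_def)
  have "norm (integral {0..1} (\<lambda>u. k (t - t * u) * d (t * u))) \<le> integral {0..1::real} (\<lambda>u. D * u ^ n)"
  proof (rule Henstock_Kurzweil_Integration.integral_norm_bound_integral)
    show "(\<lambda>u. k (t - t * u) * d (t * u)) integrable_on {0..1}" using cF by (rule integrable_continuous_interval)
    show "(\<lambda>u. D * u ^ n) integrable_on {0..1::real}" by (intro integrable_continuous_interval continuous_intros)
    fix u :: real assume u: "u \<in> {0..1}"
    have a1: "\<bar>t - t * u\<bar> \<le> a"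
    proof -
      have "t - t * u = t * (1 - u)" by (simp add: algebra_simps)
      then have "\<bar>t - t * u\<bar> = \<bar>t\<bar> * (1 - u)" using u by (simp add: abs_mult)
      also have "\<dots> \<le> \<bar>t\<bar>" using u by (simp add: mult_left_le)
      finally show ?thesis using t by simp
    qed
    have a2: "\<bar>t * u\<bar> \<le> a" using u t by (auto simp: abs_mult intro: order_trans[OF mult_left_le])
    have "cmod (k (t - t * u) * d (t * u)) = cmod (k (t - t * u)) * cmod (d (t * u))" by (simp add: norm_mult)
    also have "\<dots> \<le> K * (C * (K * \<bar>t * u\<bar>) ^ n / fact n)"
      by (intro mult_mono K(2)[OF a1] C(2)[OF a2]) (use K in auto)
    also have "\<dots> = D * u ^ n" using u by (simp add: D_def abs_mult power_mult_distrib)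
    finally show "norm (k (t - t * u) * d (t * u)) \<le> D * u ^ n" .
  qed
  also have "integral {0..1::real} (\<lambda>u. D * u ^ n) = D / real (Suc n)"
    using integral_pow01[of n] by (simp add: integral_mult_right integral_unique)
  finally have i: "norm (integral {0..1} (\<lambda>u. k (t - t * u) * d (t * u))) \<le> D / real (Suc n)" .
  have eq: "cmod (vol k d t) = \<bar>t\<bar> * norm (integral {0..1} (\<lambda>u. k (t - t * u) * d (t * u)))"
    by (simp add: vol_def oint_scaled[OF F] norm_mult)
  have "cmod (vol k d t) \<le> \<bar>t\<bar> * (D / real (Suc n))"
    by (subst eq) (rule mult_left_mono[OF i abs_ge_zero])
  also have "\<dots> = C * (K * \<bar>t\<bar>) ^ Suc n / fact (Suc n)"
    by (simp add: D_def field_simps)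
  finally show ?thesis .
qed

primrec vit :: "(real \<Rightarrow> complex) \<Rightarrow> (real \<Rightarrow> complex) \<Rightarrow> nat \<Rightarrow> real \<Rightarrow> complex" where
  "vit k f 0 = f"
| "vit k f (Suc n) = (\<lambda>t. - vol k (vit k f n) t)"

lemma vit_cont:
  assumes k: "continuous_on UNIV k" and f: "continuous_on UNIV f"
  shows "continuous_on UNIV (vit k f n)"
proof (induction n)
  case 0 then show ?case using f by simp
next
  case (Suc n) then show ?case using vol_cont[OF k Suc] by (auto intro: continuous_intros)
qed

lemma vit_bound:
  assumes k: "continuous_on UNIV k" and f: "continuous_on UNIV f"
    and K: "0 \<le> K" "\<And>s. \<bar>s\<bar> \<le> a \<Longrightarrow> cmod (k s) \<le> K"
    and C: "0 \<le> C" "\<And>s. \<bar>s\<bar> \<le> a \<Longrightarrow> cmod (f s) \<le> C"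
  shows "\<bar>s\<bar> \<le> a \<Longrightarrow> cmod (vit k f n s) \<le> C * (K * \<bar>s\<bar>) ^ n / fact n"
proof (induction n arbitrary: s)
  case 0 then show ?case using C by simp
next
  case (Suc n)
  have "cmod (vol k (vit k f n) s) \<le> C * (K * \<bar>s\<bar>) ^ Suc n / fact (Suc n)"
    by (rule vol_step[OF k vit_cont[OF k f] K C(1) Suc.IH Suc.prems])
  then show ?case by simp
qed

lemma vol_bound_simple:
  assumes k: "continuous_on UNIV k" and g: "continuous_on UNIV g"
    and K: "\<And>s. \<bar>s\<bar> \<le> \<bar>t\<bar> \<Longrightarrow> cmod (k s) \<le> K"
    and B: "\<And>s. \<bar>s\<bar> \<le> \<bar>t\<bar> \<Longrightarrow> cmod (g s) \<le> B"
  shows "cmod (vol k g t) \<le> \<bar>t\<bar> * (K * B)"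
  unfolding vol_def
proof (rule oint_bound[OF cont_vol_integrand[OF k g]])
  fix u :: real assume u: "u \<in> {0..1}"
  have "t - t * u = t * (1 - u)" by (simp add: algebra_simps)
  then have "\<bar>t - t * u\<bar> = \<bar>t\<bar> * (1 - u)" using u by (simp add: abs_mult)
  also have "\<dots> \<le> \<bar>t\<bar>" using u by (simp add: mult_left_le)
  finally have a1: "\<bar>t - t * u\<bar> \<le> \<bar>t\<bar>" .
  have a2: "\<bar>t * u\<bar> \<le> \<bar>t\<bar>" using u by (auto simp: abs_mult mult_left_le)
  have "cmod (k 0) \<le> K" using K[of 0] by simp
  then have "0 \<le> K" by (meson norm_ge_zero order_trans)
  then show "cmod (k (t - t * u) * g (t * u)) \<le> K * B"
    by (simp add: norm_mult) (intro mult_mono K a1 B a2 norm_ge_zero)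
qed

lemma exp_partial_le:
  fixes x :: real assumes "0 \<le> x"
  shows "(\<Sum>i<N. x ^ i / fact i) \<le> exp x"
proof -
  have s: "summable (\<lambda>n. x ^ n / fact n)"
    using summable_exp[of x] by (simp add: field_simps)
  have "(\<Sum>i<N. x ^ i / fact i) \<le> (\<Sum>n. x ^ n / fact n)"
    by (rule sum_le_suminf[OF s]) (use assms in auto)
  also have "(\<Sum>n. x ^ n / fact n) = exp x"
    by (simp add: exp_def field_simps)
  finally show ?thesis .
qed

lemma volterra_exists:
  assumes k: "continuous_on UNIV k" and f: "continuous_on UNIV f"
  shows "\<exists>g. continuous_on UNIV g \<and> (\<forall>t. g t = f t - vol k g t) \<and>
    (\<forall>a K C t. 0 \<le> K \<longrightarrow> 0 \<le> C \<longrightarrow> (\<forall>s. \<bar>s\<bar> \<le> a \<longrightarrow> cmod (k s) \<le> K) \<longrightarrow>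
       (\<forall>s. \<bar>s\<bar> \<le> a \<longrightarrow> cmod (f s) \<le> C) \<longrightarrow> \<bar>t\<bar> \<le> a \<longrightarrow> cmod (g t) \<le> C * exp (K * a))"
proof -
  define g where "g t = (\<Sum>n. vit k f n t)" for t
  define S where "S N t = (\<Sum>i<N. vit k f i t)" for N t
  have Sc: "continuous_on UNIV (S N)" for N
    unfolding S_def by (intro continuous_on_sum vit_cont[OF k f])
  have unif: "uniform_limit {-a..a} S g sequentially" for a
  proof -
    obtain K where K: "0 \<le> K" "\<And>s. \<bar>s\<bar> \<le> a \<Longrightarrow> cmod (k s) \<le> K" using cont_bound[OF k] by blast
    obtain C where C: "0 \<le> C" "\<And>s. \<bar>s\<bar> \<le> a \<Longrightarrow> cmod (f s) \<le> C" using cont_bound[OF f] by blast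
    have "uniform_limit {-a..a} (\<lambda>N t. \<Sum>i<N. vit k f i t) (\<lambda>t. \<Sum>i. vit k f i t) sequentially"
    proof (rule Weierstrass_m_test)
      fix n x assume x: "x \<in> {-a..a}"
      then have xa: "\<bar>x\<bar> \<le> a" by auto
      have "cmod (vit k f n x) \<le> C * (K * \<bar>x\<bar>) ^ n / fact n"
        by (rule vit_bound[OF k f K C xa])
      also have "\<dots> \<le> C * (inverse (fact n) * (K * a) ^ n)"
        using K C xa by (auto simp: field_simps intro!: mult_left_mono power_mono mult_mono)
      finally show "norm (vit k f n x) \<le> C * (inverse (fact n) * (K * a) ^ n)" .
    next
      show "summable (\<lambda>n. C * (inverse (fact n) * (K * a) ^ n))"
        by (intro summable_mult summable_exp)
    qed
    then show ?thesis by (simp add: S_def[abs_def] g_def[abs_def])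
  qed
  have gc: "continuous_on UNIV g"
  proof (rule continuous_at_imp_continuous_on, intro ballI)
    fix x :: real
    define a where "a = \<bar>x\<bar> + 1"
    have "continuous_on {-a..a} g"
      by (rule uniform_limit_theorem[OF _ unif]) (intro always_eventually allI continuous_on_subset[OF Sc], auto)
    moreover have "x \<in> interior {-a..a}" by (auto simp: a_def)
    ultimately show "isCont g x" by (rule continuous_on_interior)
  qed
  have pw: "(\<lambda>N. S N t) \<longlonglongrightarrow> g t" for t
    by (rule tendsto_uniform_limitI[OF unif[of "\<bar>t\<bar>"]]) auto
  have eq: "g t = f t - vol k g t" for t
  proof -
    have SS: "S (Suc N) t = f t - vol k (S N) t" for N
    proof -
      have "S (Suc N) t = vit k f 0 t + (\<Sum>i<N. vit k f (Suc i) t)"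
        unfolding S_def by (rule sum.lessThan_Suc_shift)
      also have "(\<Sum>i<N. vit k f (Suc i) t) = - (\<Sum>i<N. vol k (vit k f i) t)"
        by (simp add: sum_negf)
      also have "(\<Sum>i<N. vol k (vit k f i) t) = vol k (S N) t"
        unfolding S_def by (rule vol_sum[OF k vit_cont[OF k f], symmetric])
      finally show ?thesis by simp
    qed
    obtain K where K: "0 \<le> K" "\<And>s. \<bar>s\<bar> \<le> \<bar>t\<bar> \<Longrightarrow> cmod (k s) \<le> K" using cont_bound[OF k] by blast
    have vl: "(\<lambda>N. vol k (S N) t) \<longlonglongrightarrow> vol k g t"
    proof (rule LIMSEQ_I)
      fix e :: real assume e: "0 < e"
      define e' where "e' = e / (\<bar>t\<bar> * K + 1)"
      have e': "0 < e'" using e K by (simp add: e'_def add_nonneg_pos)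
      from unif[of "\<bar>t\<bar>", unfolded uniform_limit_iff, rule_format, OF e']
      obtain N0 where N0: "\<And>N s. N \<ge> N0 \<Longrightarrow> s \<in> {-\<bar>t\<bar>..\<bar>t\<bar>} \<Longrightarrow> dist (S N s) (g s) < e'"
        unfolding eventually_sequentially by blast
      show "\<exists>no. \<forall>n\<ge>no. norm (vol k (S n) t - vol k g t) < e"
      proof (intro exI allI impI)
        fix N assume N: "N \<ge> N0"
        have "norm (vol k (S N) t - vol k g t) = cmod (vol k (\<lambda>s. S N s - g s) t)"
          by (simp add: vol_diff[OF k Sc gc])
        also have "\<dots> \<le> \<bar>t\<bar> * (K * e')"
        proof (rule vol_bound_simple[OF k _ K(2)])
          show "continuous_on UNIV (\<lambda>s. S N s - g s)" by (intro continuous_intros Sc gc)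
          fix s :: real assume "\<bar>s\<bar> \<le> \<bar>t\<bar>"
          then have "dist (S N s) (g s) < e'" using N0[OF N] by (auto simp: abs_le_iff)
          then show "cmod (S N s - g s) \<le> e'" by (simp add: dist_norm)
        qed
        also have "\<dots> < e"
        proof -
          have "\<bar>t\<bar> * (K * e') = e * (\<bar>t\<bar> * K) / (\<bar>t\<bar> * K + 1)"
            by (simp add: e'_def)
          also have "\<dots> < e"
            using e K by (simp add: divide_less_eq add_nonneg_pos mult_strict_left_mono)
          finally show ?thesis .
        qed
        finally show "norm (vol k (S N) t - vol k g t) < e" .
      qed
    qed
    have "(\<lambda>N. S (Suc N) t) \<longlonglongrightarrow> f t - vol k g t"
      unfolding SS by (intro tendsto_intros vl)
    moreover have "(\<lambda>N. S (Suc N) t) \<longlonglongrightarrow> g t"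
      using pw[of t] by (rule LIMSEQ_Suc)
    ultimately show ?thesis using LIMSEQ_unique by metis
  qed
  have bd: "cmod (g t) \<le> C * exp (K * a)"
    if K: "0 \<le> K" "\<forall>s. \<bar>s\<bar> \<le> a \<longrightarrow> cmod (k s) \<le> K"
      and C: "0 \<le> C" "\<forall>s. \<bar>s\<bar> \<le> a \<longrightarrow> cmod (f s) \<le> C" and t: "\<bar>t\<bar> \<le> a" for a K C t
  proof -
    have "cmod (S N t) \<le> C * exp (K * a)" for N
    proof -
      have "cmod (S N t) \<le> (\<Sum>i<N. cmod (vit k f i t))"
        unfolding S_def by (rule norm_sum)
      also have "\<dots> \<le> (\<Sum>i<N. C * ((K * \<bar>t\<bar>) ^ i / fact i))"
        by (intro sum_mono) (use vit_bound[OF k f K(1) _ C(1) _ t] K C in auto)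
      also have "\<dots> = C * (\<Sum>i<N. (K * \<bar>t\<bar>) ^ i / fact i)"
        by (simp add: sum_distrib_left)
      also have "\<dots> \<le> C * exp (K * \<bar>t\<bar>)"
        using K C by (intro mult_left_mono exp_partial_le) auto
      also have "\<dots> \<le> C * exp (K * a)"
        using K C t by (intro mult_left_mono) (auto intro: mult_left_mono)
      finally show ?thesis .
    qed
    moreover have "(\<lambda>N. cmod (S N t)) \<longlonglongrightarrow> cmod (g t)"
      by (intro tendsto_intros pw)
    ultimately show ?thesis
      by (intro LIMSEQ_le_const2[of "\<lambda>N. cmod (S N t)"]) auto
  qed
  show ?thesis
    by (intro exI[of _ g] conjI gc allI eq impI) (auto intro: bd)
qed

lemma volterra_unique0:
  assumes k: "continuous_on UNIV k" and h: "continuous_on UNIV h"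
    and eq: "\<And>t. h t = - vol k h t"
  shows "h t = 0"
proof -
  obtain K where K: "0 \<le> K" "\<And>s. \<bar>s\<bar> \<le> \<bar>t\<bar> \<Longrightarrow> cmod (k s) \<le> K" using cont_bound[OF k] by blast
  obtain C where C: "0 \<le> C" "\<And>s. \<bar>s\<bar> \<le> \<bar>t\<bar> \<Longrightarrow> cmod (h s) \<le> C" using cont_bound[OF h] by blast
  have ind: "\<bar>s\<bar> \<le> \<bar>t\<bar> \<Longrightarrow> cmod (h s) \<le> C * (K * \<bar>s\<bar>) ^ n / fact n" for n s
  proof (induction n arbitrary: s)
    case 0 then show ?case using C by simp
  next
    case (Suc n)
    have "cmod (vol k h s) \<le> C * (K * \<bar>s\<bar>) ^ Suc n / fact (Suc n)"
      by (rule vol_step[OF k h K C(1) Suc.IH Suc.prems])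
    then show ?case by (subst eq) simp
  qed
  have "(\<lambda>n. inverse (fact n) * (K * \<bar>t\<bar>) ^ n) \<longlonglongrightarrow> 0"
    by (rule summable_LIMSEQ_zero[OF summable_exp])
  then have "(\<lambda>n. C * (inverse (fact n) * (K * \<bar>t\<bar>) ^ n)) \<longlonglongrightarrow> C * 0"
    by (intro tendsto_intros)
  moreover have "cmod (h t) \<le> C * (inverse (fact n) * (K * \<bar>t\<bar>) ^ n)" for n
    using ind[of t n] by (simp add: field_simps)
  ultimately have "cmod (h t) \<le> C * 0"
    by (intro LIMSEQ_le_const[of "\<lambda>n. C * (inverse (fact n) * (K * \<bar>t\<bar>) ^ n)"]) auto
  then show ?thesis by simp
qed

lemma volterra_unique:
  assumes k: "continuous_on UNIV k" and g1: "continuous_on UNIV g1" and g2: "continuous_on UNIV g2"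
    and e1: "\<And>t. g1 t = f t - vol k g1 t" and e2: "\<And>t. g2 t = f t - vol k g2 t"
  shows "g1 = g2"
proof
  fix t
  have h: "continuous_on UNIV (\<lambda>s. g1 s - g2 s)" using g1 g2 by (intro continuous_intros)
  have "(\<lambda>s. g1 s - g2 s) t = 0"
  proof (rule volterra_unique0[OF k h])
    fix t
    have "g1 t - g2 t = - (vol k g1 t - vol k g2 t)" using e1[of t] e2[of t] by simp
    also have "vol k g1 t - vol k g2 t = vol k (\<lambda>s. g1 s - g2 s) t"
      by (rule vol_diff[OF k g1 g2, symmetric])
    finally show "g1 t - g2 t = - vol k (\<lambda>s. g1 s - g2 s) t" .
  qed
  then show "g1 t = g2 t" by simp
qed

definition vsol :: "(real \<Rightarrow> complex) \<Rightarrow> (real \<Rightarrow> complex) \<Rightarrow> real \<Rightarrow> complex" where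
  "vsol k f = (SOME g. continuous_on UNIV g \<and> (\<forall>t. g t = f t - vol k g t))"

lemma vsol:
  assumes k: "continuous_on UNIV k" and f: "continuous_on UNIV f"
  shows "continuous_on UNIV (vsol k f)" "vsol k f t = f t - vol k (vsol k f) t"
proof -
  have ex: "\<exists>g. continuous_on UNIV g \<and> (\<forall>t. g t = f t - vol k g t)"
    using volterra_exists[OF k f] by blast
  show "continuous_on UNIV (vsol k f)" "vsol k f t = f t - vol k (vsol k f) t"
    using someI_ex[OF ex] unfolding vsol_def by auto
qed

lemma vsol_unique:
  assumes k: "continuous_on UNIV k" and f: "continuous_on UNIV f"
    and g: "continuous_on UNIV g" and e: "\<And>t. g t = f t - vol k g t"
  shows "vsol k f = g"
  by (rule volterra_unique[OF k vsol(1)[OF k f] g vsol(2)[OF k f] e])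

lemma vsol_bound:
  assumes k: "continuous_on UNIV k" and f: "continuous_on UNIV f"
    and K: "0 \<le> K" "\<And>s. \<bar>s\<bar> \<le> a \<Longrightarrow> cmod (k s) \<le> K"
    and C: "0 \<le> C" "\<And>s. \<bar>s\<bar> \<le> a \<Longrightarrow> cmod (f s) \<le> C"
    and t: "\<bar>t\<bar> \<le> a"
  shows "cmod (vsol k f t) \<le> C * exp (K * a)"
proof -
  obtain g where g: "continuous_on UNIV g" "\<And>t. g t = f t - vol k g t"
    and b: "\<And>a K C t. 0 \<le> K \<Longrightarrow> 0 \<le> C \<Longrightarrow> (\<forall>s. \<bar>s\<bar> \<le> a \<longrightarrow> cmod (k s) \<le> K) \<Longrightarrow>
       (\<forall>s. \<bar>s\<bar> \<le> a \<longrightarrow> cmod (f s) \<le> C) \<Longrightarrow> \<bar>t\<bar> \<le> a \<Longrightarrow> cmod (g t) \<le> C * exp (K * a)"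
    using volterra_exists[OF k f] by blast
  have "vsol k f = g" by (rule vsol_unique[OF k f g])
  then show ?thesis using b[OF K(1) C(1) _ _ t] K(2) C(2) by auto
qed

lemma sg_bl: "sc_group J S \<Longrightarrow> bounded_linear (S t)"
  by (simp add: sc_group_def bounded_clinear_op_def)

lemma sg_J: "sc_group J S \<Longrightarrow> S t (J x) = J (S t x)"
  by (simp add: sc_group_def bounded_clinear_op_def)

lemma sg_0: "sc_group J S \<Longrightarrow> S 0 x = x"
  by (simp add: sc_group_def)

lemma sg_add: "sc_group J S \<Longrightarrow> S (s + t) x = S s (S t x)"
  by (simp add: sc_group_def)

lemma sg_cont: "sc_group J S \<Longrightarrow> continuous_on UNIV (\<lambda>t. S t x)"
  by (simp add: sc_group_def)

lemma sg_tendsto: "sc_group J S \<Longrightarrow> (f \<longlongrightarrow> y) F \<Longrightarrow> ((\<lambda>h. S t (f h)) \<longlongrightarrow> S t y) F"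
  by (rule bounded_linear.tendsto[OF sg_bl])

lemma sg_uniform_bound:
  fixes S :: "real \<Rightarrow> 'a::banach \<Rightarrow> 'a"
  assumes S: "sc_group J S"
  obtains M where "0 \<le> M" "\<And>t x. \<bar>t\<bar> \<le> a \<Longrightarrow> norm (S t x) \<le> M * norm x"
proof -
  define E where "E n = {x. \<forall>t\<in>{-a..a}. norm (S t x) \<le> real n}" for n :: nat
  have cl: "closed (E n)" for n
  proof -
    have "E n = (\<Inter>t\<in>{-a..a}. {x. norm (S t x) \<le> real n})" by (auto simp: E_def)
    moreover have "closed {x. norm (S t x) \<le> real n}" for t
      by (intro closed_Collect_le continuous_intros bounded_linear.continuous_on[OF sg_bl[OF S]])
    ultimately show ?thesis by auto
  qed
  have un: "(\<Union>n. E n) = UNIV"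
  proof (intro set_eqI iffI)
    fix x :: 'a
    obtain C where C: "0 \<le> C" "\<And>s. \<bar>s\<bar> \<le> a \<Longrightarrow> norm (S s x) \<le> C"
      using cont_bound[OF sg_cont[OF S]] by blast
    have "norm (S t x) \<le> real (nat \<lceil>C\<rceil>)" if "t \<in> {-a..a}" for t
      using C(2)[of t] that real_nat_ceiling_ge[of C] by (auto simp: abs_le_iff)
    then have "x \<in> E (nat \<lceil>C\<rceil>)" by (auto simp: E_def)
    then show "x \<in> (\<Union>n. E n)" by blast
  qed auto
  have "\<exists>n. interior (E n) \<noteq> {}"
  proof (rule ccontr)
    assume "\<not> ?thesis"
    then have "euclidean interior_of \<Union>(range E) = {}"
      by (intro Baire_category_alt) (auto simp: completely_metrizable_space_euclidean euclidean_interior_of cl closed_closedin[symmetric])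
    then show False using un by (simp add: euclidean_interior_of)
  qed
  then obtain n x0 where "x0 \<in> interior (E n)" by blast
  then obtain r where r: "r > 0" "ball x0 r \<subseteq> E n" by (auto simp: mem_interior)
  define M where "M = 4 * real n / r"
  have M: "0 \<le> M" using r by (simp add: M_def)
  have "norm (S t y) \<le> M * norm y" if t: "\<bar>t\<bar> \<le> a" for t y
  proof (cases "y = 0")
    case True then show ?thesis using linear_simps(3)[OF sg_bl[OF S]] by simp
  next
    case False
    define c where "c = r / 2 / norm y"
    have c: "c > 0" using r False by (simp add: c_def)
    define y' where "y' = c *\<^sub>R y"
    have "norm y' = r / 2" using False r by (simp add: y'_def c_def)
    then have "x0 + y' \<in> E n" "x0 \<in> E n" using r by (auto simp: dist_norm intro!: subsetD[OF r(2)])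
    then have b1: "norm (S t (x0 + y')) \<le> real n" "norm (S t x0) \<le> real n" using t by (auto simp: E_def abs_le_iff)
    have "S t y' = S t (x0 + y') - S t x0" by (simp add: linear_simps[OF sg_bl[OF S]])
    then have "norm (S t y') \<le> 2 * real n" using b1 norm_triangle_ineq4[of "S t (x0 + y')" "S t x0"] by simp
    moreover have "S t y' = c *\<^sub>R S t y" by (simp add: y'_def linear_simps[OF sg_bl[OF S]])
    ultimately have "c * norm (S t y) \<le> 2 * real n" using c by simp
    then have "norm (S t y) \<le> 2 * real n / c" using c by (simp add: field_simps)
    also have "2 * real n / c = M * norm y" using r False by (simp add: c_def M_def field_simps)
    finally show ?thesis .
  qed
  then show ?thesis using that M by blast
qed

lemma gen_I:
  assumes "((\<lambda>h. (1 / h) *\<^sub>R (S h x - x)) \<longlongrightarrow> y) (at (0::real))"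
  shows "x \<in> gen_dom S" "gen S x = y"
  using assms by (auto simp: gen_dom_def gen_def intro: tendsto_Lim)

lemma gen_D:
  assumes "x \<in> gen_dom S"
  shows "((\<lambda>h. (1 / h) *\<^sub>R (S h x - x)) \<longlongrightarrow> gen S x) (at (0::real))"
proof -
  obtain y where y: "((\<lambda>h. (1 / h) *\<^sub>R (S h x - x)) \<longlongrightarrow> y) (at (0::real))"
    using assms by (auto simp: gen_dom_def)
  then show ?thesis using gen_I(2)[of S x y, OF y] by simp
qed

lemma vderiv_from_quot:
  fixes f :: "real \<Rightarrow> 'b::real_normed_vector"
  assumes "((\<lambda>h. (1 / h) *\<^sub>R (f (t + h) - f t)) \<longlongrightarrow> D) (at 0)"
  shows "(f has_vector_derivative D) (at t)"
  unfolding has_vector_derivative_def has_derivative_at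
proof (intro conjI)
  show "bounded_linear (\<lambda>x. x *\<^sub>R D)" by (rule bounded_linear_scaleR_left)
  have "((\<lambda>h. norm ((1 / h) *\<^sub>R (f (t + h) - f t) - D)) \<longlongrightarrow> norm (D - D)) (at 0)"
    by (intro tendsto_intros assms)
  then have l: "((\<lambda>h. norm ((1 / h) *\<^sub>R (f (t + h) - f t) - D)) \<longlongrightarrow> 0) (at 0)" by simp
  show "((\<lambda>h. norm (f (t + h) - f t - h *\<^sub>R D) / norm h) \<longlongrightarrow> 0) (at 0)"
  proof (rule Lim_transform_within[OF l zero_less_one])
    fix h :: real assume "0 < dist h 0" "dist h 0 < 1"
    then have h: "h \<noteq> 0" by simp
    have "(1 / h) *\<^sub>R (f (t + h) - f t) - D = (1 / h) *\<^sub>R (f (t + h) - f t - h *\<^sub>R D)"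
      using h by (simp add: algebra_simps)
    then show "norm ((1 / h) *\<^sub>R (f (t + h) - f t) - D) = norm (f (t + h) - f t - h *\<^sub>R D) / norm h"
      by (simp add: divide_inverse_commute)
  qed
qed

lemma sg_deriv:
  assumes S: "sc_group J S" and x: "x \<in> gen_dom S"
  shows "((\<lambda>t. S t x) has_vector_derivative S t (gen S x)) (at t)"
proof (rule vderiv_from_quot)
  have "((\<lambda>h. S t ((1 / h) *\<^sub>R (S h x - x))) \<longlongrightarrow> S t (gen S x)) (at 0)"
    by (rule sg_tendsto[OF S gen_D[OF x]])
  moreover have "S t ((1 / h) *\<^sub>R (S h x - x)) = (1 / h) *\<^sub>R (S (t + h) x - S t x)" for h
    by (simp add: linear_simps[OF sg_bl[OF S]] sg_add[OF S])
  ultimately show "((\<lambda>h. (1 / h) *\<^sub>R (S (t + h) x - S t x)) \<longlongrightarrow> S t (gen S x)) (at 0)" by simp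
qed

lemma sg_ftc:
  assumes S: "sc_group J S" and x: "x \<in> gen_dom S"
  shows "S h x - x = oint h (\<lambda>s. S s (gen S x))"
proof -
  have c: "continuous_on UNIV (\<lambda>s. S s (gen S x))" by (rule sg_cont[OF S])
  show ?thesis
  proof (rule same_deriv_eq[where h="\<lambda>t. S t (gen S x)"])
    show "((\<lambda>t. S t x - x) has_vector_derivative S t (gen S x)) (at t)" for t
      using sg_deriv[OF S x, of t] by (auto intro: derivative_eq_intros)
    show "((\<lambda>t. oint t (\<lambda>s. S s (gen S x))) has_vector_derivative S t (gen S x)) (at t)" for t
      by (rule oint_deriv[OF c])
    show "S 0 x - x = oint 0 (\<lambda>s. S s (gen S x))" by (simp add: sg_0[OF S])
  qed
qed

lemma sg_int_dom:
  assumes S: "sc_group J S"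
  shows "oint h (\<lambda>s. S s y) \<in> gen_dom S" "gen S (oint h (\<lambda>s. S s y)) = S h y - y"
proof -
  define F where "F s = S s y" for s
  have F: "continuous_on UNIV F" unfolding F_def by (rule sg_cont[OF S])
  have G: "continuous_on UNIV (\<lambda>s. F (h + s) - F s)"
    by (intro continuous_intros contU[OF F] F)
  have eq: "S r (oint h F) - oint h F = oint r (\<lambda>s. F (h + s) - F s)" for r
  proof -
    have "S r (oint h F) = oint h (\<lambda>s. S r (F s))"
      by (rule oint_linear[OF F sg_bl[OF S]])
    also have "\<dots> = oint h (\<lambda>s. F (r + s))"
      by (simp add: F_def sg_add[OF S])
    also have "\<dots> = oint (r + h) F - oint r F"
      using oint_shift[OF F, of r h] by simp
    also have "oint (r + h) F = oint h F + oint r (\<lambda>s. F (h + s))"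
      using oint_shift[OF F, of h r] by (simp add: add.commute)
    finally have "S r (oint h F) - oint h F = oint r (\<lambda>s. F (h + s)) - oint r F" by simp
    also have "\<dots> = oint r (\<lambda>s. F (h + s) - F s)"
      by (rule oint_diff[OF contU[OF F] F, symmetric]) (intro continuous_intros)
    finally show ?thesis .
  qed
  have "((\<lambda>r. (1 / r) *\<^sub>R oint r ((\<lambda>r s. F (h + s) - F s) r)) \<longlongrightarrow> (\<lambda>r s. F (h + s) - F s) 0 0) (at 0)"
    by (rule oint_limit) (intro continuous_intros contU[OF F] contU[OF G])
  then have "((\<lambda>r. (1 / r) *\<^sub>R (S r (oint h F) - oint h F)) \<longlongrightarrow> S h y - y) (at 0)"
    by (simp add: eq F_def sg_0[OF S])
  moreover have Fe: "(\<lambda>s. S s y) = F" by (simp add: F_def[abs_def])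
  ultimately show "oint h (\<lambda>s. S s y) \<in> gen_dom S" "gen S (oint h (\<lambda>s. S s y)) = S h y - y"
    using gen_I[of S "oint h F" "S h y - y"] by simp_all
qed

lemma sg_closed:
  fixes S :: "real \<Rightarrow> 'a::banach \<Rightarrow> 'a"
  assumes S: "sc_group J S"
  shows "closed (op_graph (gen_dom S) (gen S))"
  unfolding closed_sequential_limits
proof (intro allI impI, elim conjE)
  fix x :: "nat \<Rightarrow> 'a \<times> 'a" and l
  assume xg: "\<forall>n. x n \<in> op_graph (gen_dom S) (gen S)" and xl: "x \<longlonglongrightarrow> l"
  define u where "u n = fst (x n)" for n
  obtain a b where l: "l = (a, b)" by (cases l)
  have udxu: "u n \<in> gen_dom S \<and> x n = (u n, gen S (u n))" for n
  proof -
    obtain xa where "x n = (xa, gen S xa)" "xa \<in> gen_dom S" using xg by (auto simp: op_graph_def)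
    then show ?thesis by (simp add: u_def)
  qed
  have ud: "u n \<in> gen_dom S" and xu: "x n = (u n, gen S (u n))" for n using udxu by auto
  have ua: "u \<longlonglongrightarrow> a" unfolding u_def using tendsto_fst[OF xl] l by simp
  have gb: "(\<lambda>n. gen S (u n)) \<longlonglongrightarrow> b" using tendsto_snd[OF xl] l xu by (simp add: xu)
  have key: "S h a - a = oint h (\<lambda>s. S s b)" for h
  proof -
    obtain M where M: "0 \<le> M" "\<And>t x. \<bar>t\<bar> \<le> \<bar>h\<bar> \<Longrightarrow> norm (S t x) \<le> M * norm x"
      using sg_uniform_bound[OF S] by blast
    have l1: "(\<lambda>n. S h (u n) - u n) \<longlonglongrightarrow> S h a - a"
      by (intro tendsto_intros sg_tendsto[OF S] ua)
    have l2: "(\<lambda>n. oint h (\<lambda>s. S s (gen S (u n)))) \<longlonglongrightarrow> oint h (\<lambda>s. S s b)"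
    proof -
      have "(\<lambda>n. \<bar>h\<bar> * (M * norm (gen S (u n) - b))) \<longlonglongrightarrow> \<bar>h\<bar> * (M * norm (b - b))"
        by (intro tendsto_intros gb)
      then have z: "(\<lambda>n. \<bar>h\<bar> * (M * norm (gen S (u n) - b))) \<longlonglongrightarrow> 0" by simp
      have "norm (oint h (\<lambda>s. S s (gen S (u n))) - oint h (\<lambda>s. S s b)) \<le> \<bar>h\<bar> * (M * norm (gen S (u n) - b))" for n
      proof -
        have "oint h (\<lambda>s. S s (gen S (u n))) - oint h (\<lambda>s. S s b) = oint h (\<lambda>s. S s (gen S (u n)) - S s b)"
          by (rule oint_diff[symmetric]) (intro sg_cont[OF S])+
        also have "\<dots> = oint h (\<lambda>s. S s (gen S (u n) - b))"
          by (simp add: linear_simps[OF sg_bl[OF S]])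
        finally have e: "oint h (\<lambda>s. S s (gen S (u n))) - oint h (\<lambda>s. S s b) = oint h (\<lambda>s. S s (gen S (u n) - b))" .
        show ?thesis unfolding e
          by (rule oint_bound'[OF sg_cont[OF S]]) (rule M(2))
      qed
      then show ?thesis
        by (intro tendsto_sandwich[OF _ _ tendsto_const z, THEN tendsto_norm_zero_cancel[where f="\<lambda>n. oint h (\<lambda>s. S s (gen S (u n))) - oint h (\<lambda>s. S s b)"], unfolded LIM_zero_iff] always_eventually allI) auto
    qed
    have "(\<lambda>n. S h (u n) - u n) = (\<lambda>n. oint h (\<lambda>s. S s (gen S (u n))))"
      using sg_ftc[OF S ud] by auto
    with l1 l2 show ?thesis using LIMSEQ_unique by metis
  qed
  have "((\<lambda>h. (1 / h) *\<^sub>R oint h ((\<lambda>h s. S s b) h)) \<longlongrightarrow> (\<lambda>h s. S s b) 0 0) (at 0)"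
    by (rule oint_limit) (intro contU[OF sg_cont[OF S]] continuous_intros)
  then have "((\<lambda>h. (1 / h) *\<^sub>R (S h a - a)) \<longlongrightarrow> b) (at 0)"
    by (simp add: key sg_0[OF S])
  then have "a \<in> gen_dom S" "gen S a = b" using gen_I[of S a b] by auto
  then show "l \<in> op_graph (gen_dom S) (gen S)" by (auto simp: op_graph_def l)
qed

context chs begin
lemma norm_cscale_le: "norm (cscale J c v) \<le> 2 * cmod c * norm v"
proof -
  have "norm (cscale J c v) \<le> norm (Re c *\<^sub>R v) + norm (Im c *\<^sub>R J v)"
    unfolding cscale_def by (rule norm_triangle_ineq)
  also have "\<dots> = \<bar>Re c\<bar> * norm v + \<bar>Im c\<bar> * norm v" by simp
  also have "\<dots> \<le> cmod c * norm v + cmod c * norm v"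
    by (intro add_mono mult_right_mono abs_Re_le_cmod abs_Im_le_cmod) auto
  finally show ?thesis by (simp add: ac_simps)
qed
end

locale stp = chs J ip for J :: "'a::banach \<Rightarrow> 'a" and ip +
  fixes U :: "real \<Rightarrow> 'a \<Rightarrow> 'a" and z w :: 'a
  assumes U: "sc_group J U" and zne: "z \<noteq> 0" and adj: "\<And>x. x \<in> gen_dom U \<Longrightarrow> ip (gen U x) z = ip x w"
begin

definition "c0 = ip z z"
definition "phi y = ip y w / c0"
definition "kk r = phi (U r z)"
definition "ff x t = phi (U t x)"
definition "gg x = vsol kk (ff x)"
definition "T t x = U t x - oint t (\<lambda>s. cscale J (gg x s) (U (t - s) z))"

lemma c0_ne: "c0 \<noteq> 0" using zne by (simp add: c0_def ip_self)

lemma phi_bl: "bounded_linear phi"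
  unfolding phi_def[abs_def] using bounded_linear_compose[OF bounded_linear_divide[of c0] ip_bl[of w]] by (simp add: o_def)

lemma phi_add: "phi (x + y) = phi x + phi y" by (simp add: phi_def ip_add add_divide_distrib)
lemma phi_cscale: "phi (cscale J c y) = c * phi y" by (simp add: phi_def ip_cscale)
lemma phi_cont [continuous_intros]: "continuous_on S f \<Longrightarrow> continuous_on S (\<lambda>t. phi (f t))"
  by (rule bounded_linear.continuous_on[OF phi_bl])

lemma kk_cont: "continuous_on UNIV kk"
  unfolding kk_def[abs_def] by (intro phi_cont sg_cont[OF U])

lemma ff_cont: "continuous_on UNIV (ff x)"
  unfolding ff_def[abs_def] by (intro phi_cont sg_cont[OF U])

lemma gg_cont: "continuous_on UNIV (gg x)"
  unfolding gg_def by (rule vsol(1)[OF kk_cont ff_cont])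

lemma gg_eq: "gg x t = ff x t - vol kk (gg x) t"
  unfolding gg_def by (rule vsol(2)[OF kk_cont ff_cont])

lemma gg_unique: "continuous_on UNIV g \<Longrightarrow> (\<And>t. g t = ff x t - vol kk g t) \<Longrightarrow> gg x = g"
  unfolding gg_def by (rule vsol_unique[OF kk_cont ff_cont])

lemma Uz_cont: "continuous_on UNIV (\<lambda>r. U r z)" by (rule sg_cont[OF U])

lemma integrand_cont2: "continuous_on UNIV (\<lambda>p. cscale J (g (snd p)) (U (fst p - snd p) z))"
  if "continuous_on UNIV g" for g
  by (intro continuous_intros contU[OF that] contU[OF Uz_cont])

lemma integrand_cont: "continuous_on UNIV (\<lambda>s. cscale J (g s) (U (t - s) z))"
  if "continuous_on UNIV g" for g
  by (intro continuous_intros that contU[OF Uz_cont])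

lemma T_cont: "continuous_on UNIV (\<lambda>t. T t x)"
proof -
  have "continuous_on UNIV (\<lambda>t. oint t (\<lambda>s. cscale J (gg x s) (U (t - s) z)))"
    using oint_cont_param[OF integrand_cont2[OF gg_cont]] by simp
  then show ?thesis unfolding T_def[abs_def] by (intro continuous_intros sg_cont[OF U])
qed

lemma phi_T: "phi (T t x) = gg x t"
proof -
  have "phi (T t x) = ff x t - phi (oint t (\<lambda>s. cscale J (gg x s) (U (t - s) z)))"
    by (simp add: T_def ff_def linear_simps[OF phi_bl])
  also have "phi (oint t (\<lambda>s. cscale J (gg x s) (U (t - s) z))) = oint t (\<lambda>s. phi (cscale J (gg x s) (U (t - s) z)))"
    by (rule oint_linear[OF integrand_cont[OF gg_cont] phi_bl])
  also have "\<dots> = vol kk (gg x) t"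
    by (simp add: vol_def phi_cscale kk_def mult.commute)
  finally show ?thesis using gg_eq[of x t] by simp
qed

lemma T_0: "T 0 x = x" by (simp add: T_def sg_0[OF U])

lemma gg_add: "gg (x + y) = (\<lambda>t. gg x t + gg y t)"
proof (rule gg_unique)
  show "continuous_on UNIV (\<lambda>t. gg x t + gg y t)" by (intro continuous_intros gg_cont)
  fix t
  have "ff (x + y) t = ff x t + ff y t" by (simp add: ff_def linear_simps[OF sg_bl[OF U]] phi_add)
  then show "gg x t + gg y t = ff (x + y) t - vol kk (\<lambda>t. gg x t + gg y t) t"
    using gg_eq[of x t] gg_eq[of y t] vol_add[OF kk_cont gg_cont gg_cont, of x y t] by simp
qed

lemma gg_cscale: "gg (cscale J c x) = (\<lambda>t. c * gg x t)"
proof (rule gg_unique)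
  show "continuous_on UNIV (\<lambda>t. c * gg x t)" by (intro continuous_intros gg_cont)
  fix t
  have "ff (cscale J c x) t = c * ff x t"
    by (simp add: ff_def clinear_cscale[OF sc_group_def[THEN iffD1, OF U, THEN conjunct1, rule_format]] phi_cscale)
  moreover have "c * gg x t = c * ff x t - c * vol kk (gg x) t"
    using arg_cong[of _ _ "\<lambda>v. c * v", OF gg_eq[of x t]] by (simp add: right_diff_distrib)
  ultimately show "c * gg x t = ff (cscale J c x) t - vol kk (\<lambda>t. c * gg x t) t"
    using vol_cmult[OF kk_cont gg_cont, of c x t] by simp
qed

lemma T_add: "T t (x + y) = T t x + T t y"
proof -
  have "oint t (\<lambda>s. cscale J (gg (x + y) s) (U (t - s) z)) =
        oint t (\<lambda>s. cscale J (gg x s) (U (t - s) z) + cscale J (gg y s) (U (t - s) z))"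
    by (simp add: gg_add cscale_add_left)
  also have "\<dots> = oint t (\<lambda>s. cscale J (gg x s) (U (t - s) z)) + oint t (\<lambda>s. cscale J (gg y s) (U (t - s) z))"
    by (rule oint_add[OF integrand_cont[OF gg_cont] integrand_cont[OF gg_cont]])
  finally show ?thesis by (simp add: T_def linear_simps[OF sg_bl[OF U]])
qed

lemma T_cscale: "T t (cscale J c x) = cscale J c (T t x)"
proof -
  have "oint t (\<lambda>s. cscale J (gg (cscale J c x) s) (U (t - s) z)) =
        oint t (\<lambda>s. cscale J c (cscale J (gg x s) (U (t - s) z)))"
    by (simp add: gg_cscale cscale_mult)
  also have "\<dots> = cscale J c (oint t (\<lambda>s. cscale J (gg x s) (U (t - s) z)))"
    by (rule oint_linear[OF integrand_cont[OF gg_cont] cscale_bl, symmetric])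
  finally show ?thesis
    by (simp add: T_def clinear_cscale[OF sc_group_def[THEN iffD1, OF U, THEN conjunct1, rule_format]] cscale_diff)
qed

lemma T_scaleR: "T t (r *\<^sub>R x) = r *\<^sub>R T t x"
  using T_cscale[of t "complex_of_real r" x] by simp

lemma T_J: "T t (J x) = J (T t x)"
  using T_cscale[of t \<i> x] by (simp add: cscale_i)

lemma T_bound: "\<exists>C. \<forall>x. norm (T t x) \<le> norm x * C"
proof -
  define a where "a = \<bar>t\<bar>"
  obtain M where M: "0 \<le> M" "\<And>s x. \<bar>s\<bar> \<le> a \<Longrightarrow> norm (U s x) \<le> M * norm x"
    using sg_uniform_bound[OF U] by blast
  obtain M2 where M2: "0 \<le> M2" "\<And>s x. \<bar>s\<bar> \<le> 2 * a \<Longrightarrow> norm (U s x) \<le> M2 * norm x"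
    using sg_uniform_bound[OF U] by blast
  obtain P where P: "0 < P" "\<And>y. norm (phi y) \<le> norm y * P"
    using bounded_linear.pos_bounded[OF phi_bl] by blast
  obtain K where K: "0 \<le> K" "\<And>s. \<bar>s\<bar> \<le> a \<Longrightarrow> cmod (kk s) \<le> K"
    using cont_bound[OF kk_cont] by blast
  define C where "C = M + a * (2 * (P * M * exp (K * a)) * (M2 * norm z))"
  have "norm (T t x) \<le> norm x * C" for x
  proof -
    have fb: "cmod (ff x s) \<le> P * M * norm x" if "\<bar>s\<bar> \<le> a" for s
    proof -
      have "cmod (ff x s) \<le> norm (U s x) * P" unfolding ff_def by (rule P(2))
      also have "\<dots> \<le> M * norm x * P" using M(2)[OF that] P by (simp add: mult_right_mono)
      finally show ?thesis by (simp add: algebra_simps)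
    qed
    have gb: "cmod (gg x s) \<le> P * M * norm x * exp (K * a)" if "\<bar>s\<bar> \<le> a" for s
      unfolding gg_def
      by (rule vsol_bound[OF kk_cont ff_cont K _ fb that]) (use P M in auto)
    have "norm (oint t (\<lambda>s. cscale J (gg x s) (U (t - s) z))) \<le> \<bar>t\<bar> * (2 * (P * M * norm x * exp (K * a)) * (M2 * norm z))"
    proof (rule oint_bound'[OF integrand_cont[OF gg_cont]])
      fix s assume s: "\<bar>s\<bar> \<le> \<bar>t\<bar>"
      have "norm (cscale J (gg x s) (U (t - s) z)) \<le> 2 * cmod (gg x s) * norm (U (t - s) z)"
        by (rule norm_cscale_le)
      also have "\<dots> \<le> 2 * (P * M * norm x * exp (K * a)) * (M2 * norm z)"
        using s gb[of s] M2(2)[of "t - s" z] P M M2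
        by (intro mult_mono) (auto simp: a_def)
      finally show "norm (cscale J (gg x s) (U (t - s) z)) \<le> 2 * (P * M * norm x * exp (K * a)) * (M2 * norm z)" .
    qed
    then have "norm (T t x) \<le> norm (U t x) + \<bar>t\<bar> * (2 * (P * M * norm x * exp (K * a)) * (M2 * norm z))"
      unfolding T_def using norm_triangle_ineq4 order_trans add_left_mono by (metis (no_types, lifting))
    also have "\<dots> \<le> M * norm x + \<bar>t\<bar> * (2 * (P * M * norm x * exp (K * a)) * (M2 * norm z))"
      using M(2)[of t x] by (simp add: a_def)
    also have "\<dots> = norm x * C" by (simp add: C_def a_def algebra_simps)
    finally show ?thesis .
  qed
  then show ?thesis by blast
qed

lemma T_bl: "bounded_linear (T t)"
proof -
  obtain C where "\<And>x. norm (T t x) \<le> norm x * C" using T_bound[of t] by blast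
  then show ?thesis by (intro bounded_linear_intro[of _ C] T_add T_scaleR) auto
qed

end

context stp begin

lemma U_cscale: "U t (cscale J c x) = cscale J c (U t x)"
  by (rule clinear_cscale[OF sc_group_def[THEN iffD1, OF U, THEN conjunct1, rule_format]])

lemma VI: "T (s + t) x = U t (T s x) - oint t (\<lambda>r. cscale J (gg x (s + r)) (U (t - r) z))"
proof -
  define F where "F r = cscale J (gg x r) (U (s + t - r) z)" for r
  have Fc: "continuous_on UNIV F" unfolding F_def by (rule integrand_cont[OF gg_cont])
  have "T (s + t) x = U (s + t) x - oint (s + t) F" by (simp add: T_def F_def[abs_def])
  also have "oint (s + t) F = oint s F + oint t (\<lambda>r. F (s + r))" by (rule oint_shift[OF Fc])
  also have "(\<lambda>r. F (s + r)) = (\<lambda>r. cscale J (gg x (s + r)) (U (t - r) z))"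
    by (simp add: F_def)
  also have "oint s F = oint s (\<lambda>r. U t (cscale J (gg x r) (U (s - r) z)))"
  proof -
    have "F r = U t (cscale J (gg x r) (U (s - r) z))" for r
    proof -
      have "U (s + t - r) z = U (t + (s - r)) z" by (simp add: algebra_simps)
      also have "\<dots> = U t (U (s - r) z)" by (rule sg_add[OF U])
      finally show ?thesis by (simp add: F_def U_cscale)
    qed
    then have "F = (\<lambda>r. U t (cscale J (gg x r) (U (s - r) z)))" by (simp add: fun_eq_iff)
    then show ?thesis by simp
  qed
  also have "\<dots> = U t (oint s (\<lambda>r. cscale J (gg x r) (U (s - r) z)))"
    by (rule oint_linear[OF integrand_cont[OF gg_cont] sg_bl[OF U], symmetric])
  also have "U (s + t) x = U t (U s x)" using sg_add[OF U, of t s x] by (simp add: add.commute)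
  finally show ?thesis
    by (simp add: T_def linear_simps[OF sg_bl[OF U]])
qed

lemma gg_shift: "gg (T s x) = (\<lambda>r. gg x (s + r))"
proof (rule gg_unique)
  show c: "continuous_on UNIV (\<lambda>r. gg x (s + r))" by (intro contU[OF gg_cont] continuous_intros)
  fix t
  have "gg x (s + t) = phi (T (s + t) x)" by (simp add: phi_T)
  also have "\<dots> = phi (U t (T s x)) - phi (oint t (\<lambda>r. cscale J (gg x (s + r)) (U (t - r) z)))"
    by (simp add: VI linear_simps[OF phi_bl])
  also have "phi (oint t (\<lambda>r. cscale J (gg x (s + r)) (U (t - r) z))) = oint t (\<lambda>r. phi (cscale J (gg x (s + r)) (U (t - r) z)))"
    by (rule oint_linear[OF integrand_cont[OF c] phi_bl])
  also have "\<dots> = vol kk (\<lambda>r. gg x (s + r)) t"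
    by (simp add: vol_def phi_cscale kk_def mult.commute)
  finally show "gg x (s + t) = ff (T s x) t - vol kk (\<lambda>r. gg x (s + r)) t" by (simp add: ff_def)
qed

lemma T_group: "T (s + t) x = T t (T s x)"
  by (simp add: VI T_def[of t "T s x"] gg_shift)

lemma T_sc: "sc_group J T"
  unfolding sc_group_def bounded_clinear_op_def
proof (intro conjI allI)
  show "bounded_linear (T t)" for t by (rule T_bl)
  show "T t (J x) = J (T t x)" for t x by (rule T_J)
  show "T 0 = id" by (simp add: fun_eq_iff T_0)
  show "T (s + t) = T s \<circ> T t" for s t using T_group[of t s] by (simp add: fun_eq_iff add.commute)
  show "continuous_on UNIV (\<lambda>t. T t x)" for x by (rule T_cont)
qed

lemma int_lim: "((\<lambda>h. (1 / h) *\<^sub>R oint h (\<lambda>s. cscale J (gg x s) (U (h - s) z))) \<longlongrightarrow> cscale J (phi x) z) (at 0)"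
proof -
  have "((\<lambda>h. (1 / h) *\<^sub>R oint h ((\<lambda>h s. cscale J (gg x s) (U (h - s) z)) h)) \<longlongrightarrow> (\<lambda>h s. cscale J (gg x s) (U (h - s) z)) 0 0) (at 0)"
    by (rule oint_limit) (use integrand_cont2[OF gg_cont] in simp)
  moreover have "gg x 0 = phi x" using gg_eq[of x 0] by (simp add: ff_def vol_def sg_0[OF U])
  ultimately show ?thesis by (simp add: sg_0[OF U])
qed

lemma T_quot: "(1 / h) *\<^sub>R (T h x - x) = (1 / h) *\<^sub>R (U h x - x) - (1 / h) *\<^sub>R oint h (\<lambda>s. cscale J (gg x s) (U (h - s) z))"
  by (simp add: T_def algebra_simps)

lemma gen_dom_T: "gen_dom T = gen_dom U"
proof (intro set_eqI iffI)
  fix x assume x: "x \<in> gen_dom T"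
  have "((\<lambda>h. (1 / h) *\<^sub>R (T h x - x) + (1 / h) *\<^sub>R oint h (\<lambda>s. cscale J (gg x s) (U (h - s) z))) \<longlongrightarrow> gen T x + cscale J (phi x) z) (at 0)"
    by (intro tendsto_intros gen_D[OF x] int_lim)
  then have "((\<lambda>h. (1 / h) *\<^sub>R (U h x - x)) \<longlongrightarrow> gen T x + cscale J (phi x) z) (at 0)"
    by (simp add: T_quot)
  then show "x \<in> gen_dom U" by (rule gen_I)
next
  fix x assume x: "x \<in> gen_dom U"
  have "((\<lambda>h. (1 / h) *\<^sub>R (U h x - x) - (1 / h) *\<^sub>R oint h (\<lambda>s. cscale J (gg x s) (U (h - s) z))) \<longlongrightarrow> gen U x - cscale J (phi x) z) (at 0)"
    by (intro tendsto_intros gen_D[OF x] int_lim)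
  then have "((\<lambda>h. (1 / h) *\<^sub>R (T h x - x)) \<longlongrightarrow> gen U x - cscale J (phi x) z) (at 0)"
    by (simp add: T_quot)
  then show "x \<in> gen_dom T" by (rule gen_I)
qed

lemma gen_T: "x \<in> gen_dom U \<Longrightarrow> gen T x = projQ J ip z (gen U x)"
proof -
  assume x: "x \<in> gen_dom U"
  have "((\<lambda>h. (1 / h) *\<^sub>R (U h x - x) - (1 / h) *\<^sub>R oint h (\<lambda>s. cscale J (gg x s) (U (h - s) z))) \<longlongrightarrow> gen U x - cscale J (phi x) z) (at 0)"
    by (intro tendsto_intros gen_D[OF x] int_lim)
  then have "((\<lambda>h. (1 / h) *\<^sub>R (T h x - x)) \<longlongrightarrow> gen U x - cscale J (phi x) z) (at 0)"
    by (simp add: T_quot)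
  then have "gen T x = gen U x - cscale J (phi x) z" by (rule gen_I)
  also have "phi x = ip (gen U x) z / ip z z" by (simp add: phi_def c0_def adj[OF x])
  finally show ?thesis by (simp add: projQ_def projP_def)
qed

end

context chs begin
lemma cscale_bl_left: "bounded_linear (\<lambda>c. cscale J c v)"
  unfolding cscale_def
  by (intro bounded_linear_add bounded_linear_compose[OF bounded_linear_scaleR_left bounded_linear_Re]
      bounded_linear_compose[OF bounded_linear_scaleR_left bounded_linear_Im])
end

context stp begin

abbreviation "Q \<equiv> projQ J ip z"
abbreviation "P \<equiv> projP J ip z"

lemma P_eq: "P x = cscale J (ip x z / c0) z" by (simp add: projP_def c0_def)
lemma Q_eq: "Q x = x - P x" by (simp add: projQ_def)

lemma P_bl: "bounded_linear P"
proof -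
  have "bounded_linear (\<lambda>x. cscale J (ip x z / c0) z)"
    using bounded_linear_compose[OF cscale_bl_left[of z] bounded_linear_compose[OF bounded_linear_divide[of c0] ip_bl[of z]]] .
  then show ?thesis by (simp add: P_eq[abs_def])
qed

lemma Q_bl: "bounded_linear Q"
  unfolding Q_eq[abs_def] by (intro bounded_linear_sub bounded_linear_ident P_bl)

lemma P_J: "P (J x) = J (P x)" by (simp add: P_eq ip_J J_cscale)
lemma Q_J: "Q (J x) = J (Q x)" by (simp add: Q_eq P_J J_diff)

lemma ip_Q: "ip (Q x) z = 0"
  using c0_ne by (simp add: Q_eq P_eq ip_diff ip_cscale c0_def[symmetric])

lemma PP: "P (P x) = P x"
proof -
  have "P (P x) = cscale J (ip (P x) z / c0) z" by (rule P_eq)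
  also have "ip (P x) z = ip x z" using c0_ne by (simp add: P_eq ip_cscale c0_def[symmetric])
  finally show ?thesis by (simp add: P_eq)
qed

lemma QP: "Q (P x) = 0" by (simp add: Q_eq PP)
lemma PQ: "P (Q x) = 0" by (simp add: Q_eq PP linear_simps[OF P_bl])
lemma QplusP: "Q x + P x = x" by (simp add: Q_eq)

lemma T_ip: "ip (T t y) z = ip y z"
proof -
  define Y where "Y = oint t (\<lambda>s. T s y)"
  have Y: "Y \<in> gen_dom T" "gen T Y = T t y - y" unfolding Y_def by (rule sg_int_dom[OF T_sc])+
  then have "Y \<in> gen_dom U" using gen_dom_T by simp
  then have "gen T Y = Q (gen U Y)" by (rule gen_T)
  then have "ip (T t y - y) z = 0" using Y ip_Q by simp
  then show ?thesis by (simp add: ip_diff)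
qed

lemma P_TQ: "P (T t (Q x)) = 0" by (simp only: P_eq T_ip ip_Q) simp
lemma Q_TQ: "Q (T t (Q x)) = T t (Q x)" by (simp only: Q_eq[of "T t (Q x)"] P_TQ) simp

definition "V t x = T t (Q x) + P x"

lemma V_sc: "sc_group J V"
  unfolding sc_group_def bounded_clinear_op_def
proof (intro conjI allI)
  show "bounded_linear (V t)" for t
    unfolding V_def[abs_def]
    by (intro bounded_linear_add bounded_linear_compose[OF T_bl Q_bl] P_bl)
  show "V t (J x) = J (V t x)" for t x by (simp add: V_def Q_J P_J T_J J_add)
  show "V 0 = id" by (simp add: fun_eq_iff V_def T_0 QplusP)
  show "V (s + t) = V s \<circ> V t" for s t
    by (simp add: fun_eq_iff V_def linear_simps[OF Q_bl] linear_simps[OF P_bl] Q_TQ P_TQ QP PP T_group[of t s, symmetric] add.commute)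
  show "continuous_on UNIV (\<lambda>t. V t x)" for x
    unfolding V_def by (intro continuous_intros T_cont)
qed

lemma V_quot: "(\<lambda>h. (1 / h) *\<^sub>R (V h x - x)) = (\<lambda>h. (1 / h) *\<^sub>R (T h (Q x) - Q x))"
proof -
  have "V h x - x = T h (Q x) - Q x" for h
    using QplusP[of x] by (simp add: V_def algebra_simps)
  then show ?thesis by simp
qed

lemma gen_dom_V: "gen_dom V = {x. Q x \<in> gen_dom T}"
  by (simp add: gen_dom_def V_quot)

lemma gen_V: "gen V x = gen T (Q x)"
  by (simp add: gen_def V_quot)

lemma graph_eq: "op_graph (gen_dom U) (\<lambda>x. Q (gen U x)) = op_graph (gen_dom T) (gen T)"
  by (auto simp: op_graph_def gen_dom_T gen_T)

lemma graph_closed: "closure (op_graph (gen_dom U) (\<lambda>x. Q (gen U x))) = op_graph (gen_dom U) (\<lambda>x. Q (gen U x))"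
  unfolding graph_eq by (rule closure_closed[OF sg_closed[OF T_sc]])

lemma final:
  "is_graph (closure (op_graph (gen_dom U) (\<lambda>x. Q (gen U x))))
    \<and> (\<exists>V. sc_group J V
         \<and> gen_dom V = {x. Q x \<in> cl_dom (gen_dom U) (\<lambda>x. Q (gen U x))}
         \<and> (\<forall>x\<in>gen_dom V. gen V x = cl_op (gen_dom U) (\<lambda>x. Q (gen U x)) (Q x)))"
proof (intro conjI exI[of _ V] ballI)
  show "is_graph (closure (op_graph (gen_dom U) (\<lambda>x. Q (gen U x))))"
    unfolding graph_closed by (auto simp: is_graph_def op_graph_def)
  show "sc_group J V" by (rule V_sc)
  have cd: "cl_dom (gen_dom U) (\<lambda>x. Q (gen U x)) = gen_dom U"
    unfolding cl_dom_def graph_closed by (auto simp: op_graph_def)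
  show "gen_dom V = {x. Q x \<in> cl_dom (gen_dom U) (\<lambda>x. Q (gen U x))}"
    unfolding cd gen_dom_V gen_dom_T ..
  fix x assume "x \<in> gen_dom V"
  then have x: "Q x \<in> gen_dom U" using gen_dom_V gen_dom_T by simp
  have "cl_op (gen_dom U) (\<lambda>x. Q (gen U x)) (Q x) = Q (gen U (Q x))"
    unfolding cl_op_def graph_closed using x by (auto simp: op_graph_def)
  then show "gen V x = cl_op (gen_dom U) (\<lambda>x. Q (gen U x)) (Q x)"
    using gen_V gen_T[OF x] by simp
qed

end

theorem lemma3:
  fixes J :: "'a::banach \<Rightarrow> 'a" and ip :: "'a \<Rightarrow> 'a \<Rightarrow> complex"
    and U :: "real \<Rightarrow> 'a \<Rightarrow> 'a" and z :: 'a
  assumes "complex_hilbert J ip"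
    and "sc_group J U"
    and "z \<in> adj_dom ip (gen_dom U) (gen U)"
    and "z \<noteq> 0"
  shows "is_graph (closure (op_graph (gen_dom U) (\<lambda>x. projQ J ip z (gen U x))))
    \<and> (\<exists>V. sc_group J V
         \<and> gen_dom V = {x. projQ J ip z x \<in> cl_dom (gen_dom U) (\<lambda>x. projQ J ip z (gen U x))}
         \<and> (\<forall>x\<in>gen_dom V. gen V x = cl_op (gen_dom U) (\<lambda>x. projQ J ip z (gen U x)) (projQ J ip z x)))"
proof -
  obtain w where w: "\<And>x. x \<in> gen_dom U \<Longrightarrow> ip (gen U x) z = ip x w"
    using assms(3) by (auto simp: adj_dom_def)
  interpret stp J ip U z w
    by (unfold_locales) (use assms w in auto)
  show ?thesis by (rule final)
qed

end
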